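(* For any $\nu\ge0$ and any $v_0\in V_h$, the projected ODE $\frac{dv}{dt}=-P_hQ(v,v)-\nu\Delta_hv$, $v(0)=v_0$, has a unique global solution $v\in C^1([0,\infty);V_h)$. It satisfies the energy equality $\frac{dE^{\rm kin}}{dt}=-\nu\|\tilde D_1v\|_{M_2}^2\le0$, where $E^{\rm kin}=\frac12\langle v,v\rangle_1$; consequently $E^{\rm kin}(t)\le E^{\rm kin}(0)$ and $\nu\int_0^T\|\tilde D_1v\|_{M_2}^2dt\le E^{\rm kin}(0)$ for all $T>0$.
   Context: On a fixed mesh, $C^k(\mathcal K^* )$ are the (finite-dimensional) dual $k$-cochain spaces; $\tilde D_1:C^1\to C^2$ is the dual coboundary matrix and $D_2$ the primal coboundary from faces to cells, with $D_2\tilde D_1^T=0$. $M_1,M_2$ are positive diagonal Hodge-star matrices, $\langle v,w\rangle_1=v^TM_1w$, $\|\omega\|_{M_2}^2=\omega^TM_2\omega$. $V_h=\ker(D_2M_1)$ and $P_h$ is the $M_1$-orthogonal projection onto $V_h$. $\Delta_h=M_1^{-1}\tilde D_1^TM_2\tilde D_1$. $v\mapsto\tilde U(v)$ is linear with values in matrices of the shape of $\tilde D_1^T$, and $Q$ is the bilinear map $M_1Q(v_1,v_2)=\frac12(\tilde U(v_1)\tilde D_1v_2-\tilde D_1^T\tilde U(v_1)^Tv_2)$. *)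

theory Defs
  imports "HOL-Analysis.Analysis"
begin

text \<open>Dual 1-cochains: real^'e; dual 2-cochains: real^'f; primal cells: real^'c.
  D1t : C^1 -> C^2 is a real^'e^'f matrix, D2 : faces -> cells is real^'e^'c.\<close>

definition pos_diag :: "real^'n^'n \<Rightarrow> bool" where
  "pos_diag M \<longleftrightarrow> (\<forall>i j. i \<noteq> j \<longrightarrow> M$i$j = 0) \<and> (\<forall>i. M$i$i > 0)"

definition inner_M :: "real^'n^'n \<Rightarrow> real^'n \<Rightarrow> real^'n \<Rightarrow> real" where
  "inner_M M v w = v \<bullet> (M *v w)"

definition normsq_M :: "real^'n^'n \<Rightarrow> real^'n \<Rightarrow> real" where
  "normsq_M M w = w \<bullet> (M *v w)"

definition Vh :: "real^'e^'c \<Rightarrow> real^'e^'e \<Rightarrow> (real^'e) set" where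
  "Vh D2 M1 = {v. (D2 ** M1) *v v = 0}"

definition Ph :: "real^'e^'c \<Rightarrow> real^'e^'e \<Rightarrow> real^'e \<Rightarrow> real^'e" where
  "Ph D2 M1 v = (THE w. w \<in> Vh D2 M1 \<and> (\<forall>u \<in> Vh D2 M1. inner_M M1 (v - w) u = 0))"

definition Deltah :: "real^'e^'e \<Rightarrow> real^'f^'f \<Rightarrow> real^'e^'f \<Rightarrow> real^'e^'e" where
  "Deltah M1 M2 D1t = matrix_inv M1 ** transpose D1t ** M2 ** D1t"

definition Qop :: "real^'e^'e \<Rightarrow> real^'e^'f \<Rightarrow> (real^'e \<Rightarrow> real^'f^'e)
    \<Rightarrow> real^'e \<Rightarrow> real^'e \<Rightarrow> real^'e" where
  "Qop M1 D1t U v1 v2 = matrix_inv M1 *v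
     ((1/2) *\<^sub>R (U v1 *v (D1t *v v2) - transpose D1t *v (transpose (U v1) *v v2)))"

definition Ekin :: "real^'e^'e \<Rightarrow> real^'e \<Rightarrow> real" where
  "Ekin M1 v = (1/2) * inner_M M1 v v"

definition is_solution ::
  "real^'e^'c \<Rightarrow> real^'e^'e \<Rightarrow> real^'f^'f \<Rightarrow> real^'e^'f \<Rightarrow> (real^'e \<Rightarrow> real^'f^'e)
   \<Rightarrow> real \<Rightarrow> real^'e \<Rightarrow> (real \<Rightarrow> real^'e) \<Rightarrow> bool" where
  "is_solution D2 M1 M2 D1t U \<nu> v0 v \<longleftrightarrow>
     v 0 = v0 \<and>
     (\<forall>t\<ge>0. v t \<in> Vh D2 M1) \<and>
     (\<exists>v'. continuous_on {0..} v' \<and>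
        (\<forall>t\<ge>0. (v has_vector_derivative v' t) (at t within {0..}))) \<and>
     (\<forall>t\<ge>0. (v has_vector_derivative
          (- Ph D2 M1 (Qop M1 D1t U (v t) (v t)) - \<nu> *\<^sub>R (Deltah M1 M2 D1t *v v t)))
        (at t within {0..}))"

end

theory Submission
  imports Defs "HOL-Analysis.Analysis"
begin

lemma diag_mv:
  assumes "pos_diag (M::real^'n^'n)"
  shows "M *v x = (\<chi> i. M$i$i * x$i)"
proof -
  have "(\<Sum>j\<in>UNIV. M$i$j * x$j) = M$i$i * x$i" for i
  proof -
    have "(\<Sum>j\<in>UNIV. M$i$j * x$j) = (\<Sum>j\<in>UNIV. if j = i then M$i$i * x$i else 0)"
      by (rule sum.cong) (use assms in \<open>auto simp: pos_diag_def\<close>)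
    also have "\<dots> = M$i$i * x$i" by simp
    finally show ?thesis .
  qed
  then show ?thesis by (simp add: vec_eq_iff matrix_vector_mult_def)
qed

lemma inner_M_diag:
  assumes "pos_diag (M::real^'n^'n)"
  shows "inner_M M a b = (\<Sum>i\<in>UNIV. M$i$i * a$i * b$i)"
  unfolding inner_M_def diag_mv[OF assms] inner_vec_def
  by (rule sum.cong) auto

lemma inner_M_sym:
  assumes "pos_diag (M::real^'n^'n)"
  shows "inner_M M a b = inner_M M b a"
  unfolding inner_M_diag[OF assms] by (rule sum.cong) auto

lemma inner_M_lower:
  assumes "pos_diag (M::real^'n^'n)"
  obtains m where "m > 0" "\<And>x. m * (x \<bullet> x) \<le> inner_M M x x"
proof -
  define m where "m = Min (range (\<lambda>i. M$i$i))"
  have m0: "m > 0" unfolding m_def using assms by (auto simp: pos_diag_def)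
  have mle: "m \<le> M$i$i" for i unfolding m_def by auto
  have "m * (x \<bullet> x) \<le> inner_M M x x" for x
  proof -
    have "m * (x \<bullet> x) = (\<Sum>i\<in>UNIV. m * x$i * x$i)"
      by (simp add: inner_vec_def sum_distrib_left mult.assoc)
    also have "\<dots> \<le> (\<Sum>i\<in>UNIV. M$i$i * x$i * x$i)"
    proof (rule sum_mono)
      fix i
      have "0 \<le> x$i * x$i" by simp
      then show "m * x$i * x$i \<le> M$i$i * x$i * x$i"
        using mult_right_mono[OF mle[of i], of "x$i * x$i"] by (simp add: mult.assoc)
    qed
    finally show ?thesis using inner_M_diag[OF assms] by simp
  qed
  with m0 that show ?thesis by blast
qed

lemma inner_M_nonneg:
  assumes "pos_diag (M::real^'n^'n)"
  shows "0 \<le> inner_M M x x"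
proof -
  obtain m where "m > 0" "\<And>x. m * (x \<bullet> x) \<le> inner_M M x x" using inner_M_lower[OF assms] by blast
  then show ?thesis by (smt (verit) inner_ge_zero mult_nonneg_nonneg)
qed

lemma inner_M_eq0:
  assumes "pos_diag (M::real^'n^'n)" "inner_M M x x = 0"
  shows "x = 0"
proof -
  obtain m where "m > 0" "\<And>x. m * (x \<bullet> x) \<le> inner_M M x x" using inner_M_lower[OF assms(1)] by blast
  then have "m * (x \<bullet> x) \<le> 0" using assms(2) by metis
  with \<open>m > 0\<close> have "x \<bullet> x \<le> 0" by (simp add: mult_le_0_iff)
  then show ?thesis by (metis inner_eq_zero_iff inner_ge_zero order_antisym)
qed

lemma inner_M_add_right: "inner_M M a (b + c) = inner_M M a b + inner_M M a c"
  by (simp add: inner_M_def matrix_vector_right_distrib inner_add_right)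
lemma inner_M_diff_right: "inner_M M a (b - c) = inner_M M a b - inner_M M a c"
  by (simp add: inner_M_def matrix_vector_mult_diff_distrib inner_diff_right)
lemma inner_M_scale_right: "inner_M M a (r *\<^sub>R b) = r * inner_M M a b"
  by (simp add: inner_M_def matrix_scaleR_vector_ac scaleR_matrix_vector_assoc[symmetric])
lemma inner_M_add_left: "inner_M M (b + c) a = inner_M M b a + inner_M M c a"
  by (simp add: inner_M_def inner_add_left)
lemma inner_M_diff_left: "inner_M M (b - c) a = inner_M M b a - inner_M M c a"
  by (simp add: inner_M_def inner_diff_left)
lemma inner_M_scale_left: "inner_M M (r *\<^sub>R b) a = r * inner_M M b a"
  by (simp add: inner_M_def)

lemma normsq_nonneg:
  assumes "pos_diag (M::real^'n^'n)"
  shows "0 \<le> normsq_M M x"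
  using inner_M_nonneg[OF assms] by (simp add: normsq_M_def inner_M_def)

lemma pos_diag_invertible:
  assumes "pos_diag (M::real^'n^'n)"
  shows "M ** matrix_inv M = mat 1"
proof -
  have "det M = (\<Prod>i\<in>UNIV. M$i$i)" by (rule det_diagonal) (use assms in \<open>auto simp: pos_diag_def\<close>)
  also have "\<dots> > 0" using assms by (intro prod_pos) (auto simp: pos_diag_def)
  finally have "det M \<noteq> 0" by simp
  then have "invertible M" using invertible_det_nz by blast
  then show ?thesis unfolding invertible_def matrix_inv_def by (metis (mono_tags, lifting) someI_ex)
qed

lemma mv_inv:
  assumes "pos_diag (M::real^'n^'n)"
  shows "M *v (matrix_inv M *v y) = y"
  by (simp add: matrix_vector_mul_assoc pos_diag_invertible[OF assms])

lemma Vh_subspace: "subspace (Vh D2 M1)"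
  unfolding subspace_def Vh_def
  by (auto simp: matrix_vector_right_distrib matrix_scaleR_vector_ac scaleR_matrix_vector_assoc[symmetric])

lemma Vh_add: "a \<in> Vh D2 M1 \<Longrightarrow> b \<in> Vh D2 M1 \<Longrightarrow> a + b \<in> Vh D2 M1"
  using Vh_subspace by (metis subspace_add)
lemma Vh_diff: "a \<in> Vh D2 M1 \<Longrightarrow> b \<in> Vh D2 M1 \<Longrightarrow> a - b \<in> Vh D2 M1"
  using Vh_subspace by (metis subspace_diff)
lemma Vh_scale: "a \<in> Vh D2 M1 \<Longrightarrow> r *\<^sub>R a \<in> Vh D2 M1"
  using Vh_subspace by (metis subspace_scale)

lemma Ph_exists:
  assumes M: "pos_diag (M1::real^'e^'e)"
  shows "\<exists>w. w \<in> Vh D2 M1 \<and> (\<forall>u \<in> Vh D2 M1. inner_M M1 (q - w) u = 0)"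
proof -
  define s where "s = (\<lambda>x::real^'e. \<chi> i. sqrt (M1$i$i) * x$i)"
  have lin: "linear s" unfolding s_def
    by (rule linearI) (auto simp: vec_eq_iff algebra_simps)
  have sin: "inner_M M1 a b = s a \<bullet> s b" for a b
  proof -
    have "M1$i$i \<ge> 0" for i using M by (auto simp: pos_diag_def less_imp_le)
    then have e: "sqrt (M1$i$i) * a$i * (sqrt (M1$i$i) * b$i) = M1$i$i * a$i * b$i" for i
      by (metis (no_types, opaque_lifting) mult.assoc mult.left_commute real_sqrt_mult_self abs_of_nonneg)
    show ?thesis unfolding inner_M_diag[OF M] s_def inner_vec_def by (simp only: vec_lambda_beta e inner_real_def)
  qed
  obtain y z where y: "y \<in> span (s ` Vh D2 M1)" and z: "\<And>w. w \<in> span (s ` Vh D2 M1) \<Longrightarrow> orthogonal z w"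
    and yz: "s q = y + z"
    by (rule orthogonal_subspace_decomp_exists[where S="s ` Vh D2 M1" and x="s q"]) blast
  have sp: "span (s ` Vh D2 M1) = s ` Vh D2 M1"
    using span_linear_image[OF lin] Vh_subspace span_eq_iff by metis
  obtain w where w: "w \<in> Vh D2 M1" "y = s w" using y sp by auto
  have "inner_M M1 (q - w) u = 0" if "u \<in> Vh D2 M1" for u
  proof -
    have "inner_M M1 (q - w) u = (s q - s w) \<bullet> s u" using sin linear_diff[OF lin] by simp
    also have "\<dots> = z \<bullet> s u" using yz w by simp
    also have "\<dots> = 0" using z[of "s u"] sp that by (auto simp: orthogonal_def)
    finally show ?thesis .
  qed
  with w show ?thesis by blast
qed

lemma Ph_unique:
  assumes M: "pos_diag (M1::real^'e^'e)"
    and w: "w \<in> Vh D2 M1" "\<forall>u \<in> Vh D2 M1. inner_M M1 (q - w) u = 0"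
  shows "Ph D2 M1 q = w"
proof -
  have uniq: "w1 = w2" if "w1 \<in> Vh D2 M1" "\<forall>u \<in> Vh D2 M1. inner_M M1 (q - w1) u = 0"
    "w2 \<in> Vh D2 M1" "\<forall>u \<in> Vh D2 M1. inner_M M1 (q - w2) u = 0" for w1 w2
  proof -
    have d: "w1 - w2 \<in> Vh D2 M1" using that Vh_diff by blast
    have "inner_M M1 (w1 - w2) (w1 - w2) = inner_M M1 ((q - w2) - (q - w1)) (w1 - w2)"
      by simp
    also have "\<dots> = 0" using that d by (simp add: inner_M_diff_left)
    finally show ?thesis using inner_M_eq0[OF M] by force
  qed
  show ?thesis unfolding Ph_def
  proof (rule the_equality)
    show "w \<in> Vh D2 M1 \<and> (\<forall>u\<in>Vh D2 M1. inner_M M1 (q - w) u = 0)" using w by blast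
    fix w' assume "w' \<in> Vh D2 M1 \<and> (\<forall>u\<in>Vh D2 M1. inner_M M1 (q - w') u = 0)"
    then show "w' = w" using uniq w by blast
  qed
qed

lemma Ph_prop:
  assumes M: "pos_diag (M1::real^'e^'e)"
  shows "Ph D2 M1 q \<in> Vh D2 M1" "\<forall>u \<in> Vh D2 M1. inner_M M1 (q - Ph D2 M1 q) u = 0"
  using Ph_exists[OF M, of D2 q] Ph_unique[OF M] by metis+

lemma Ph_linear:
  assumes M: "pos_diag (M1::real^'e^'e)"
  shows "linear (Ph D2 M1)"
proof (rule linearI)
  fix x y
  show "Ph D2 M1 (x + y) = Ph D2 M1 x + Ph D2 M1 y"
  proof (rule Ph_unique[OF M])
    show "Ph D2 M1 x + Ph D2 M1 y \<in> Vh D2 M1" using Ph_prop[OF M] Vh_add by blast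
    show "\<forall>u\<in>Vh D2 M1. inner_M M1 (x + y - (Ph D2 M1 x + Ph D2 M1 y)) u = 0"
    proof
      fix u assume u: "u \<in> Vh D2 M1"
      have "x + y - (Ph D2 M1 x + Ph D2 M1 y) = (x - Ph D2 M1 x) + (y - Ph D2 M1 y)" by simp
      then have "inner_M M1 (x + y - (Ph D2 M1 x + Ph D2 M1 y)) u = inner_M M1 (x - Ph D2 M1 x) u + inner_M M1 (y - Ph D2 M1 y) u"
        by (metis inner_M_add_left)
      then show "inner_M M1 (x + y - (Ph D2 M1 x + Ph D2 M1 y)) u = 0"
        using Ph_prop(2)[OF M, of D2 x] Ph_prop(2)[OF M, of D2 y] u by simp
    qed
  qed
next
  fix r x
  show "Ph D2 M1 (r *\<^sub>R x) = r *\<^sub>R Ph D2 M1 x"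
  proof (rule Ph_unique[OF M])
    show "r *\<^sub>R Ph D2 M1 x \<in> Vh D2 M1" using Ph_prop[OF M] Vh_scale by blast
    show "\<forall>u\<in>Vh D2 M1. inner_M M1 (r *\<^sub>R x - r *\<^sub>R Ph D2 M1 x) u = 0"
    proof
      fix u assume u: "u \<in> Vh D2 M1"
      have "r *\<^sub>R x - r *\<^sub>R Ph D2 M1 x = r *\<^sub>R (x - Ph D2 M1 x)" by (simp add: scaleR_diff_right)
      then show "inner_M M1 (r *\<^sub>R x - r *\<^sub>R Ph D2 M1 x) u = 0"
        using Ph_prop(2)[OF M, of D2 x] u by (simp add: inner_M_scale_left)
    qed
  qed
qed

lemma Ph_adj:
  assumes M: "pos_diag (M1::real^'e^'e)" and u: "u \<in> Vh D2 M1"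
  shows "inner_M M1 u (Ph D2 M1 q) = inner_M M1 u q"
proof -
  have "inner_M M1 (q - Ph D2 M1 q) u = 0" using Ph_prop(2)[OF M] u by blast
  then have "inner_M M1 q u = inner_M M1 (Ph D2 M1 q) u" by (simp add: inner_M_diff_left)
  then show ?thesis using inner_M_sym[OF M] by metis
qed

definition Fvec :: "real^'e^'c \<Rightarrow> real^'e^'e \<Rightarrow> real^'f^'f \<Rightarrow> real^'e^'f \<Rightarrow> (real^'e \<Rightarrow> real^'f^'e)
   \<Rightarrow> real \<Rightarrow> real^'e \<Rightarrow> real^'e" where
  "Fvec D2 M1 M2 D1t U \<nu> v = - Ph D2 M1 (Qop M1 D1t U v v) - \<nu> *\<^sub>R (Deltah M1 M2 D1t *v v)"

lemma Deltah_mv: "Deltah M1 M2 D1t *v v = matrix_inv M1 *v (transpose D1t *v (M2 *v (D1t *v v)))"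
  by (simp add: Deltah_def matrix_vector_mul_assoc matrix_mul_assoc)

lemma Deltah_Vh:
  assumes D: "D2 ** transpose D1t = 0" and M: "pos_diag M1"
  shows "Deltah M1 M2 D1t *v v \<in> Vh D2 M1"
proof -
  have "(D2 ** M1) *v (Deltah M1 M2 D1t *v v) = D2 *v (M1 *v (Deltah M1 M2 D1t *v v))"
    by (simp add: matrix_vector_mul_assoc matrix_mul_assoc)
  also have "\<dots> = D2 *v (transpose D1t *v (M2 *v (D1t *v v)))"
    by (simp add: Deltah_mv mv_inv[OF M])
  also have "\<dots> = (D2 ** transpose D1t) *v (M2 *v (D1t *v v))" by (rule matrix_vector_mul_assoc)
  also have "\<dots> = 0" unfolding D by (simp add: vec_eq_iff matrix_vector_mult_def)
  finally show ?thesis by (simp add: Vh_def)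
qed

lemma Fvec_Vh:
  assumes D: "D2 ** transpose D1t = 0" and M: "pos_diag M1"
  shows "Fvec D2 M1 M2 D1t U \<nu> v \<in> Vh D2 M1"
  unfolding Fvec_def
  using Ph_prop(1)[OF M] Deltah_Vh[OF D M] Vh_diff Vh_scale
  by (metis diff_0 Vh_subspace subspace_0 )

lemma vm_add: "(x::real^'m) v* (A + B) = x v* A + x v* B"
  by (simp add: vec_eq_iff vector_matrix_mult_def sum.distrib algebra_simps)
lemma vm_scale: "(x::real^'m) v* (r *\<^sub>R A) = r *\<^sub>R (x v* A)"
  by (simp add: vec_eq_iff vector_matrix_mult_def sum_distrib_left algebra_simps)
lemma vm_scale_left: "(r *\<^sub>R (x::real^'m)) v* A = r *\<^sub>R (x v* A)"
  by (simp add: vec_eq_iff vector_matrix_mult_def sum_distrib_left algebra_simps)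
lemma mv_neg: "(A::real^'n^'m) *v (- x) = - (A *v x)"
  by (simp add: vec_eq_iff matrix_vector_mult_def sum_negf)
lemma mv_scale: "(A::real^'n^'m) *v (r *\<^sub>R x) = r *\<^sub>R (A *v x)"
  by (simp add: matrix_scaleR_vector_ac scaleR_matrix_vector_assoc[symmetric])

lemma Qop_alt: "Qop M1 D1t U v1 v2 = matrix_inv M1 *v
     ((1/2) *\<^sub>R (U v1 *v (D1t *v v2) - ((v2 v* U v1) v* D1t)))"
  by (simp add: Qop_def transpose_matrix_vector)

lemma Qop_bilinear:
  assumes U: "linear U"
  shows "bilinear (Qop M1 D1t U)"
  unfolding bilinear_def
proof (intro conjI allI)
  fix x
  show "linear (Qop M1 D1t U x)"
    by (rule linearI) (simp_all add: Qop_def matrix_vector_right_distrib mv_scale algebra_simps scaleR_diff_right)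
next
  fix y
  show "linear (\<lambda>x. Qop M1 D1t U x y)"
    by (rule linearI) (simp_all add: Qop_alt linear_add[OF U] linear_scale[OF U] vm_add vm_scale
        matrix_vector_mult_add_rdistrib matrix_vector_right_distrib mv_scale vm_scale_left algebra_simps scaleR_diff_right
        scaleR_matrix_vector_assoc[symmetric])
qed

lemma Qop_energy:
  assumes M: "pos_diag M1"
  shows "inner_M M1 u (Qop M1 D1t U u u) = 0"
proof -
  have e: "u \<bullet> ((u v* U u) v* D1t) = u \<bullet> (U u *v (D1t *v u))"
    by (metis dot_lmul_matrix inner_commute)
  show ?thesis
    by (simp add: inner_M_def Qop_alt mv_inv[OF M] inner_diff_right e)
qed

lemma Deltah_energy:
  assumes M: "pos_diag M1"
  shows "inner_M M1 u (Deltah M1 M2 D1t *v u) = normsq_M M2 (D1t *v u)"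
  unfolding inner_M_def normsq_M_def Deltah_mv mv_inv[OF M]
  by (metis dot_lmul_matrix inner_commute transpose_matrix_vector)

lemma Fvec_energy:
  assumes M: "pos_diag M1" and u: "u \<in> Vh D2 M1"
  shows "inner_M M1 u (Fvec D2 M1 M2 D1t U \<nu> u) = - \<nu> * normsq_M M2 (D1t *v u)"
proof -
  have "inner_M M1 u (Fvec D2 M1 M2 D1t U \<nu> u) =
     - inner_M M1 u (Ph D2 M1 (Qop M1 D1t U u u)) - \<nu> * inner_M M1 u (Deltah M1 M2 D1t *v u)"
    unfolding Fvec_def by (simp add: inner_M_def inner_diff_right matrix_vector_mult_diff_distrib mv_neg mv_scale)
  also have "\<dots> = - \<nu> * normsq_M M2 (D1t *v u)"
    by (simp add: Ph_adj[OF M u] Qop_energy[OF M] Deltah_energy[OF M])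
  finally show ?thesis .
qed

lemma Fvec_lip_ex:
  assumes M: "pos_diag M1" and U: "linear U"
  shows "\<exists>K\<ge>0. \<forall>x y. norm x \<le> R \<longrightarrow> norm y \<le> R \<longrightarrow>
     norm (Fvec D2 M1 M2 D1t U \<nu> x - Fvec D2 M1 M2 D1t U \<nu> y) \<le> K * norm (x - y)"
proof -
  let ?P = "Ph D2 M1" and ?Q = "Qop M1 D1t U" and ?D = "\<lambda>x. Deltah M1 M2 D1t *v x"
  have lP: "linear ?P" by (rule Ph_linear[OF M])
  have bQ: "bounded_bilinear ?Q" using Qop_bilinear[OF U] bilinear_conv_bounded_bilinear by blast
  have lD: "linear ?D" by simp
  obtain KP where KP: "KP > 0" "\<And>x. norm (?P x) \<le> norm x * KP"
    using lP linear_conv_bounded_linear bounded_linear.pos_bounded by blast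
  obtain KD where KD: "KD > 0" "\<And>x. norm (?D x) \<le> norm x * KD"
    using lD linear_conv_bounded_linear bounded_linear.pos_bounded by blast
  obtain KQ where KQ: "KQ > 0" "\<And>a b. norm (?Q a b) \<le> norm a * norm b * KQ"
    using bQ bounded_bilinear.pos_bounded by blast
  define K where "K = KP * (2 * max R 0 * KQ) + \<bar>\<nu>\<bar> * KD"
  have K0: "K \<ge> 0" unfolding K_def using KP KD KQ by simp
  have "norm (Fvec D2 M1 M2 D1t U \<nu> x - Fvec D2 M1 M2 D1t U \<nu> y) \<le> K * norm (x - y)"
    if x: "norm x \<le> R" and y: "norm y \<le> R" for x y
  proof -
    have qd: "?Q x x - ?Q y y = ?Q x (x - y) + ?Q (x - y) y"
      using bQ by (simp add: bounded_bilinear.diff_right bounded_bilinear.diff_left)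
    have nq: "norm (?Q x x - ?Q y y) \<le> 2 * max R 0 * KQ * norm (x - y)"
    proof -
      have "norm (?Q x x - ?Q y y) \<le> norm (?Q x (x - y)) + norm (?Q (x - y) y)"
        unfolding qd by (rule norm_triangle_ineq)
      also have "\<dots> \<le> norm x * norm (x - y) * KQ + norm (x - y) * norm y * KQ"
        using KQ(2) by (intro add_mono) auto
      also have "\<dots> \<le> max R 0 * norm (x - y) * KQ + norm (x - y) * max R 0 * KQ"
        using x y KQ(1) by (intro add_mono mult_right_mono mult_left_mono) auto
      finally show ?thesis by (simp add: algebra_simps)
    qed
    have "Fvec D2 M1 M2 D1t U \<nu> x - Fvec D2 M1 M2 D1t U \<nu> y
        = - ?P (?Q x x - ?Q y y) - \<nu> *\<^sub>R ?D (x - y)"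
      unfolding Fvec_def using linear_diff[OF lP] linear_diff[OF lD] by (simp add: algebra_simps)
    then have "norm (Fvec D2 M1 M2 D1t U \<nu> x - Fvec D2 M1 M2 D1t U \<nu> y)
        \<le> norm (?P (?Q x x - ?Q y y)) + \<bar>\<nu>\<bar> * norm (?D (x - y))"
      by (metis norm_minus_cancel norm_scaleR norm_triangle_ineq4 real_norm_def)
    also have "\<dots> \<le> norm (?Q x x - ?Q y y) * KP + \<bar>\<nu>\<bar> * (norm (x - y) * KD)"
      using KP(2) KD(2) by (intro add_mono mult_left_mono) auto
    also have "\<dots> \<le> (2 * max R 0 * KQ * norm (x - y)) * KP + \<bar>\<nu>\<bar> * (norm (x - y) * KD)"
      using nq KP(1) KD(1) by (intro add_mono mult_right_mono) auto
    also have "\<dots> = K * norm (x - y)" unfolding K_def by (simp add: algebra_simps)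
    finally show ?thesis .
  qed
  with K0 show ?thesis by blast
qed

lemma nonpos_deriv_decr:
  fixes f :: "real \<Rightarrow> real"
  assumes t: "0 \<le> t"
    and d: "\<And>s. s \<in> {0..t} \<Longrightarrow> (f has_real_derivative f' s) (at s within {0..t})"
    and n: "\<And>s. s \<in> {0..t} \<Longrightarrow> f' s \<le> 0"
  shows "f t \<le> f 0"
proof (rule DERIV_nonpos_imp_decreasing_open[OF t])
  fix x assume x: "0 < x" "x < t"
  then have "(f has_real_derivative f' x) (at x)" using d[of x] at_within_Icc_at[OF x] by simp
  then show "\<exists>y. (f has_real_derivative y) (at x) \<and> y \<le> 0" using n[of x] x by auto
next
  show "continuous_on {0..t} f"
    unfolding continuous_on_eq_continuous_within
    using d by (metis has_real_derivative_iff_has_vector_derivative has_vector_derivative_continuous)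
qed

lemma ode_unique:
  fixes G :: "'a::euclidean_space \<Rightarrow> 'a"
  assumes L: "\<And>x y. norm (G x - G y) \<le> L * norm (x - y)" "0 \<le> L"
    and dx: "\<And>s. s \<in> {0..b} \<Longrightarrow> (x has_vector_derivative G (x s)) (at s within {0..b})"
    and dy: "\<And>s. s \<in> {0..b} \<Longrightarrow> (y has_vector_derivative G (y s)) (at s within {0..b})"
    and x0: "x 0 = y 0" and t: "t \<in> {0..b}"
  shows "x t = y t"
proof -
  define d where "d s = (x s - y s) \<bullet> (x s - y s)" for s
  define h where "h s = exp (- (2 * L) * s) * d s" for s
  define d' where "d' s = (x s - y s) \<bullet> (G (x s) - G (y s)) + (G (x s) - G (y s)) \<bullet> (x s - y s)" for s
  have dd: "(d has_real_derivative d' s) (at s within {0..t})" if s: "s \<in> {0..t}" for s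
  proof -
    have sb: "s \<in> {0..b}" using s t by auto
    have sub: "{0..t} \<subseteq> {0..b}" using t by auto
    have "((\<lambda>s. x s - y s) has_vector_derivative (G (x s) - G (y s))) (at s within {0..t})"
      using has_vector_derivative_diff[OF dx[OF sb] dy[OF sb]] has_vector_derivative_within_subset sub by blast
    from bounded_bilinear.has_vector_derivative[OF bounded_bilinear_inner this this]
    show ?thesis unfolding d_def d'_def has_real_derivative_iff_has_vector_derivative .
  qed
  have hd: "(h has_real_derivative (exp (- (2 * L) * s) * (- (2 * L)) * d s + exp (- (2 * L) * s) * d' s)) (at s within {0..t})"
    if s: "s \<in> {0..t}" for s
    unfolding h_def
    by (rule derivative_eq_intros dd[OF s] refl)+ (simp add: algebra_simps)
  have hn: "exp (- (2 * L) * s) * (- (2 * L)) * d s + exp (- (2 * L) * s) * d' s \<le> 0" for s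
  proof -
    have "(x s - y s) \<bullet> (G (x s) - G (y s)) \<le> norm (x s - y s) * norm (G (x s) - G (y s))"
      by (rule norm_cauchy_schwarz)
    also have "\<dots> \<le> norm (x s - y s) * (L * norm (x s - y s))"
      using L(1) by (intro mult_left_mono) auto
    also have "\<dots> = L * d s" unfolding d_def by (simp add: power2_norm_eq_inner[symmetric] power2_eq_square)
    finally have "d' s \<le> 2 * L * d s" unfolding d'_def by (simp add: inner_commute)
    then have "- (2 * L) * d s + d' s \<le> 0" by simp
    from mult_left_mono[OF this, of "exp (- (2 * L) * s)"]
    show ?thesis by (simp add: algebra_simps)
  qed
  have "h t \<le> h 0" using t by (intro nonpos_deriv_decr[OF _ hd hn]) auto
  moreover have "h 0 = 0" unfolding h_def d_def using x0 by simp
  moreover have "h t \<ge> 0" unfolding h_def d_def by simp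
  ultimately have "h t = 0" by simp
  then have "d t = 0" unfolding h_def by simp
  then show ?thesis unfolding d_def by simp
qed

lemma lip_cont:
  fixes G :: "'a::real_normed_vector \<Rightarrow> 'b::real_normed_vector"
  assumes L: "\<And>x y. norm (G x - G y) \<le> L * norm (x - y)" "0 \<le> L"
  shows "continuous_on S G"
proof -
  have "L-lipschitz_on UNIV G" unfolding lipschitz_on_def using L by (simp add: dist_norm)
  then show ?thesis using lipschitz_on_continuous_on continuous_on_subset by blast
qed

lemma power_fact_small:
  fixes a :: real
  obtains N where "a ^ N / fact N < 1"
proof -
  have "summable (\<lambda>n. a ^ n /\<^sub>R fact n)" by (rule summable_exp_generic)
  then have "(\<lambda>n. a ^ n /\<^sub>R fact n) \<longlonglongrightarrow> 0" by (rule summable_LIMSEQ_zero)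
  then have "eventually (\<lambda>n. a ^ n /\<^sub>R fact n < 1) sequentially"
    by (rule order_tendstoD) simp
  then obtain N where "a ^ N /\<^sub>R fact N < 1" by (auto simp: eventually_sequentially)
  then show ?thesis using that by (simp add: divide_inverse_commute)
qed

lemma integral_power_bound:
  fixes C c :: real and n :: nat
  assumes "0 \<le> c"
  shows "((\<lambda>s. C * s ^ n) has_integral (C * c ^ Suc n / Suc n)) {0..c}"
proof -
  have "((\<lambda>s. C * s ^ n) has_integral ((\<lambda>s. (C / Suc n) * s ^ Suc n) c - (\<lambda>s. (C / Suc n) * s ^ Suc n) 0)) {0..c}"
  proof (rule fundamental_theorem_of_calculus[OF assms])
    fix x :: real
    have "((\<lambda>s. (C / Suc n) * s ^ Suc n) has_real_derivative (C / Suc n) * (Suc n * x ^ n)) (at x within {0..c})"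
    proof (intro DERIV_cmult)
      have "((\<lambda>s. s ^ Suc n) has_real_derivative real (Suc n) * x ^ n) (at x)"
        using DERIV_pow[of "Suc n" x] by simp
      then show "((\<lambda>s. s ^ Suc n) has_real_derivative real (Suc n) * x ^ n) (at x within {0..c})"
        by (rule has_field_derivative_at_within)
    qed
    then show "((\<lambda>s. (C / Suc n) * s ^ Suc n) has_vector_derivative C * x ^ n) (at x within {0..c})"
      unfolding has_real_derivative_iff_has_vector_derivative[symmetric] by (simp del: of_nat_Suc)
  qed
  then show ?thesis by simp
qed

lemma ode_exists_interval:
  fixes G :: "'a::euclidean_space \<Rightarrow> 'a"
  assumes L: "\<And>x y. norm (G x - G y) \<le> L * norm (x - y)" "0 \<le> L" and b: "0 \<le> b"
  shows "\<exists>x. x 0 = x0 \<and> (\<forall>s\<in>{0..b}. (x has_vector_derivative G (x s)) (at s within {0..b}))"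
proof -
  have Gc: "continuous_on S G" for S using lip_cont[OF L] .
  define cl where "cl t = max 0 (min b t)" for t :: real
  have cl_in: "cl t \<in> {0..b}" for t unfolding cl_def using b by auto
  have cl_id: "t \<in> {0..b} \<Longrightarrow> cl t = t" for t unfolding cl_def by auto
  have cl_cont: "continuous_on UNIV cl" unfolding cl_def by (intro continuous_intros)
  define P where "P f = (\<lambda>t. x0 + integral {0..cl t} (\<lambda>s. G (f s)))" for f :: "real \<Rightarrow> 'a"
  have gc: "continuous_on UNIV (\<lambda>s. G (apply_bcontfun f s))" for f :: "real \<Rightarrow>\<^sub>C 'a"
    by (rule continuous_on_compose2[OF Gc continuous_on_apply_bcontfun]) auto
  have Ider: "((\<lambda>u. integral {0..u} (\<lambda>s. G (apply_bcontfun f s))) has_vector_derivative G (apply_bcontfun f u)) (at u within {0..b})"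
    if "u \<in> {0..b}" for f u
    by (rule integral_has_vector_derivative[OF continuous_on_subset[OF gc] that]) auto
  have Icont: "continuous_on {0..b} (\<lambda>u. x0 + integral {0..u} (\<lambda>s. G (apply_bcontfun f s)))" for f
    unfolding continuous_on_eq_continuous_within
  proof
    fix u assume u: "u \<in> {0..b}"
    show "continuous (at u within {0..b}) (\<lambda>u. x0 + integral {0..u} (\<lambda>s. G (apply_bcontfun f s)))"
      by (rule continuous_add[OF continuous_const has_vector_derivative_continuous[OF Ider[OF u]]])
  qed
  have Pin: "P (apply_bcontfun f) \<in> bcontfun" for f
  proof -
    have c: "continuous_on UNIV (P (apply_bcontfun f))"
      unfolding P_def
      by (rule continuous_on_compose2[OF Icont[of f] cl_cont]) (use cl_in in auto)
    have "range (P (apply_bcontfun f)) \<subseteq> (\<lambda>u. x0 + integral {0..u} (\<lambda>s. G (apply_bcontfun f s))) ` {0..b}"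
      unfolding P_def using cl_in by auto
    moreover have "compact ((\<lambda>u. x0 + integral {0..u} (\<lambda>s. G (apply_bcontfun f s))) ` {0..b})"
      by (rule compact_continuous_image[OF Icont]) simp
    ultimately have "bounded (range (P (apply_bcontfun f)))"
      using compact_imp_bounded bounded_subset by blast
    with c show ?thesis unfolding bcontfun_def by simp
  qed
  define \<Phi> where "\<Phi> f = Bcontfun (P (apply_bcontfun f))" for f :: "real \<Rightarrow>\<^sub>C 'a"
  have \<Phi>_app: "apply_bcontfun (\<Phi> f) t = x0 + integral {0..cl t} (\<lambda>s. G (apply_bcontfun f s))" for f t
    unfolding \<Phi>_def using Bcontfun_inverse[OF Pin[of f]] by (simp add: P_def)
  have est: "norm (apply_bcontfun ((\<Phi> ^^ n) f) t - apply_bcontfun ((\<Phi> ^^ n) g) t) \<le> (L * cl t) ^ n / fact n * dist f g"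
    for n f g t
  proof (induction n arbitrary: t)
    case 0
    then show ?case using dist_bounded[of f t g] by (simp add: dist_norm)
  next
    case (Suc n)
    let ?F = "apply_bcontfun ((\<Phi> ^^ n) f)" and ?G = "apply_bcontfun ((\<Phi> ^^ n) g)"
    define c where "c = cl t"
    have c0: "0 \<le> c" "c \<le> b" using cl_in[of t] unfolding c_def by auto
    have intF: "(\<lambda>s. G (?F s)) integrable_on {0..c}" 
      by (rule integrable_continuous_interval[OF continuous_on_subset[OF gc]]) auto
    have intG: "(\<lambda>s. G (?G s)) integrable_on {0..c}" 
      by (rule integrable_continuous_interval[OF continuous_on_subset[OF gc]]) auto
    define K where "K = L ^ Suc n * dist f g / fact n"
    have pw: "((\<lambda>s. K * s ^ n) has_integral (K * c ^ Suc n / Suc n)) {0..c}"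
      by (rule integral_power_bound[OF c0(1)])
    have "norm (apply_bcontfun ((\<Phi> ^^ Suc n) f) t - apply_bcontfun ((\<Phi> ^^ Suc n) g) t)
        = norm (integral {0..c} (\<lambda>s. G (?F s)) - integral {0..c} (\<lambda>s. G (?G s)))"
      by (simp add: \<Phi>_app c_def)
    also have "\<dots> = norm (integral {0..c} (\<lambda>s. G (?F s) - G (?G s)))"
      using integral_diff[OF intF intG] by simp
    also have "\<dots> \<le> integral {0..c} (\<lambda>s. K * s ^ n)"
    proof (rule integral_norm_bound_integral)
      show "(\<lambda>s. G (?F s) - G (?G s)) integrable_on {0..c}" using intF intG by (rule integrable_diff)
      show "(\<lambda>s. K * s ^ n) integrable_on {0..c}" using pw by blast
      fix s assume s: "s \<in> {0..c}"
      then have "cl s = s" using cl_id c0 by auto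
      then have ih: "norm (?F s - ?G s) \<le> (L * s) ^ n / fact n * dist f g" using Suc.IH[of s] by simp
      have "norm (G (?F s) - G (?G s)) \<le> L * norm (?F s - ?G s)" by (rule L(1))
      also have "\<dots> \<le> L * ((L * s) ^ n / fact n * dist f g)" using ih L(2) by (rule mult_left_mono)
      also have "\<dots> = K * s ^ n" unfolding K_def by (simp add: power_mult_distrib)
      finally show "norm (G (?F s) - G (?G s)) \<le> K * s ^ n" .
    qed
    also have "\<dots> = K * c ^ Suc n / Suc n" using pw by (rule integral_unique)
    also have "\<dots> = (L * cl t) ^ Suc n / fact (Suc n) * dist f g"
      unfolding K_def c_def by (simp add: power_mult_distrib field_simps)
    finally show ?case .
  qed
  have estd: "dist ((\<Phi> ^^ n) f) ((\<Phi> ^^ n) g) \<le> (L * b) ^ n / fact n * dist f g" for n f g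
  proof (rule dist_bound)
    fix t
    have "(L * cl t) ^ n \<le> (L * b) ^ n"
      using cl_in[of t] L(2) by (intro power_mono mult_left_mono) auto
    then have "(L * cl t) ^ n / fact n * dist f g \<le> (L * b) ^ n / fact n * dist f g"
      by (intro mult_right_mono divide_right_mono) auto
    then show "dist (apply_bcontfun ((\<Phi> ^^ n) f) t) (apply_bcontfun ((\<Phi> ^^ n) g) t) \<le> (L * b) ^ n / fact n * dist f g"
      using est[of n f t g] by (simp add: dist_norm)
  qed
  obtain N where N: "(L * b) ^ N / fact N < 1" using power_fact_small by blast
  have "\<exists>!z. (\<Phi> ^^ N) z = z"
    by (rule banach_fix_type[of "(L * b) ^ N / fact N"]) (use N estd L(2) b in auto)
  then obtain z where z: "(\<Phi> ^^ N) z = z" and zu: "\<And>w. (\<Phi> ^^ N) w = w \<Longrightarrow> w = z" by blast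
  have "(\<Phi> ^^ N) (\<Phi> z) = \<Phi> z" by (metis funpow_swap1 z)
  then have fz: "\<Phi> z = z" using zu z by metis
  define x where "x = apply_bcontfun z"
  have xeq: "x t = x0 + integral {0..cl t} (\<lambda>s. G (x s))" for t
    using \<Phi>_app[of z t] fz unfolding x_def by simp
  have "x 0 = x0" using xeq[of 0] cl_id[of 0] b by simp
  moreover have "(x has_vector_derivative G (x s)) (at s within {0..b})" if s: "s \<in> {0..b}" for s
  proof (rule has_vector_derivative_transform[OF s])
    show "x u = x0 + integral {0..u} (\<lambda>s. G (x s))" if "u \<in> {0..b}" for u
      using xeq[of u] cl_id[OF that] by simp
    show "((\<lambda>u. x0 + integral {0..u} (\<lambda>s. G (x s))) has_vector_derivative G (x s)) (at s within {0..b})"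
      using has_vector_derivative_add[OF has_vector_derivative_const Ider[OF s, of z]] unfolding x_def by simp
  qed
  ultimately show ?thesis by blast
qed

lemma ode_exists_global:
  fixes G :: "'a::euclidean_space \<Rightarrow> 'a"
  assumes L: "\<And>x y. norm (G x - G y) \<le> L * norm (x - y)" "0 \<le> L"
  shows "\<exists>x. x 0 = x0 \<and> (\<forall>t\<ge>0. (x has_vector_derivative G (x t)) (at t within {0..}))"
proof -
  have "\<forall>b. \<exists>x. 0 \<le> b \<longrightarrow> (x 0 = x0 \<and> (\<forall>s\<in>{0..b}. (x has_vector_derivative G (x s)) (at s within {0..b})))"
    using ode_exists_interval[OF L] by blast
  then obtain S where S: "\<And>b. 0 \<le> b \<Longrightarrow> S b 0 = x0 \<and> (\<forall>s\<in>{0..b}. (S b has_vector_derivative G (S b s)) (at s within {0..b}))"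
    by metis
  have agree: "S b t = S b' t" if b: "0 \<le> b" "0 \<le> b'" and t: "t \<in> {0..min b b'}" for b b' t
  proof (rule ode_unique[OF L _ _ _ t])
    show "(S b has_vector_derivative G (S b s)) (at s within {0..min b b'})" if "s \<in> {0..min b b'}" for s
    proof -
      have "s \<in> {0..b}" using that by simp
      then have "(S b has_vector_derivative G (S b s)) (at s within {0..b})" using S[OF b(1)] by blast
      then show ?thesis by (rule has_vector_derivative_within_subset) auto
    qed
    show "(S b' has_vector_derivative G (S b' s)) (at s within {0..min b b'})" if "s \<in> {0..min b b'}" for s
    proof -
      have "s \<in> {0..b'}" using that by simp
      then have "(S b' has_vector_derivative G (S b' s)) (at s within {0..b'})" using S[OF b(2)] by blast
      then show ?thesis by (rule has_vector_derivative_within_subset) auto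
    qed
    show "S b 0 = S b' 0" using S b by simp
  qed
  define x where "x t = S (t + 1) t" for t
  have "x 0 = x0" unfolding x_def using S[of 1] by simp
  moreover have "(x has_vector_derivative G (x t)) (at t within {0..})" if t: "t \<ge> 0" for t
  proof -
    define b where "b = t + 1"
    have b0: "0 \<le> b" using t unfolding b_def by simp
    have xS: "x u = S b u" if "u \<in> {0..b}" for u
      unfolding x_def using agree[of "u + 1" b u] that b0 by auto
    have tb: "t \<in> {0..b}" using t unfolding b_def by simp
    have "(S b has_vector_derivative G (S b t)) (at t within {0..b})" using S[OF b0] tb by blast
    then have "(x has_vector_derivative G (x t)) (at t within {0..b})"
      using has_vector_derivative_transform[OF tb xS] xS[OF tb] by simp
    moreover have "at t within {0..} = at t within {0..b}"
      by (rule at_within_nhd[of t "{..<b}"]) (use t b_def in auto)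
    ultimately show ?thesis by simp
  qed
  ultimately show ?thesis by blast
qed

lemma Vh_inv:
  fixes w :: "real \<Rightarrow> real^'e"
  assumes w0: "w 0 \<in> Vh D2 M1"
    and d: "\<And>t. t \<ge> 0 \<Longrightarrow> (w has_vector_derivative H t) (at t within {0..})"
    and h: "\<And>t. t \<ge> 0 \<Longrightarrow> H t \<in> Vh D2 M1"
    and t: "t \<ge> 0"
  shows "w t \<in> Vh D2 M1"
proof -
  let ?A = "D2 ** M1"
  have bl: "bounded_linear (\<lambda>x::real^'e. ?A *v x)"
    using matrix_vector_mul_linear linear_conv_bounded_linear by blast
  have "((\<lambda>s. ?A *v w s) has_derivative (\<lambda>h. 0)) (at s within {0..})" if s: "s \<in> {0..}" for s
  proof -
    have "((\<lambda>s. ?A *v w s) has_vector_derivative ?A *v H s) (at s within {0..})"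
      using bounded_linear.has_vector_derivative[OF bl d] s by simp
    moreover have "?A *v H s = 0" using h[of s] s by (simp add: Vh_def)
    ultimately show ?thesis by (simp add: has_vector_derivative_def)
  qed
  then obtain c where c: "\<forall>x\<in>{0..}. ?A *v w x = c"
    using has_derivative_zero_constant[of "{0::real..}" "\<lambda>s. ?A *v w s"] by (auto simp: convex_real_interval)
  have "c = 0" using c w0 by (auto simp: Vh_def)
  then show ?thesis using c t by (simp add: Vh_def)
qed

lemma Ekin_deriv:
  fixes w :: "real \<Rightarrow> real^'e" and M1 :: "real^'e^'e"
  assumes M: "pos_diag M1" and d: "(w has_vector_derivative H) (at t within S)"
  shows "((\<lambda>s. Ekin M1 (w s)) has_real_derivative inner_M M1 (w t) H) (at t within S)"
proof -
  have bl: "bounded_linear (\<lambda>x::real^'e. M1 *v x)"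
    using matrix_vector_mul_linear linear_conv_bounded_linear by blast
  have d2: "((\<lambda>s. M1 *v w s) has_vector_derivative M1 *v H) (at t within S)"
    using bounded_linear.has_vector_derivative[OF bl d] .
  have "((\<lambda>s. w s \<bullet> (M1 *v w s)) has_vector_derivative (w t \<bullet> (M1 *v H) + H \<bullet> (M1 *v w t))) (at t within S)"
    by (rule bounded_bilinear.has_vector_derivative[OF bounded_bilinear_inner d d2])
  then have "((\<lambda>s. w s \<bullet> (M1 *v w s)) has_real_derivative 2 * inner_M M1 (w t) H) (at t within S)"
    unfolding has_real_derivative_iff_has_vector_derivative
    using inner_M_sym[OF M, of H "w t"] by (simp add: inner_M_def)
  from DERIV_cmult[OF this, of "1/2"] show ?thesis
    by (simp add: Ekin_def inner_M_def)
qed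

lemma Ekin_decr:
  assumes M: "pos_diag M1"
    and d: "\<And>t. t \<ge> 0 \<Longrightarrow> (w has_vector_derivative H t) (at t within {0..})"
    and n: "\<And>t. t \<ge> 0 \<Longrightarrow> inner_M M1 (w t) (H t) \<le> 0"
    and t: "t \<ge> 0"
  shows "Ekin M1 (w t) \<le> Ekin M1 (w 0)"
proof (rule nonpos_deriv_decr[OF t])
  fix s assume s: "s \<in> {0..t}"
  have "(w has_vector_derivative H s) (at s within {0..})" using d[of s] s by simp
  then have "(w has_vector_derivative H s) (at s within {0..t})"
    by (rule has_vector_derivative_within_subset) auto
  then show "((\<lambda>s. Ekin M1 (w s)) has_real_derivative inner_M M1 (w s) (H s)) (at s within {0..t})"
    by (rule Ekin_deriv[OF M])
  show "inner_M M1 (w s) (H s) \<le> 0" using n s by simp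
qed

lemma le_one_plus_sq: "(a::real) \<le> 1 + a ^ 2"
proof (cases "a \<le> 1")
  case True
  then show ?thesis using zero_le_power2[of a] by linarith
next
  case False
  then have "a * 1 \<le> a * a" by (intro mult_left_mono) auto
  then show ?thesis by (simp add: power2_eq_square)
qed

theorem theorem4p8:
  fixes D1t :: "real^'e^'f" and D2 :: "real^'e^'c"
    and M1 :: "real^'e^'e" and M2 :: "real^'f^'f"
    and U :: "real^'e \<Rightarrow> real^'f^'e"
    and \<nu> :: real and v0 :: "real^'e"
  assumes "D2 ** transpose D1t = 0"
    and "pos_diag M1" and "pos_diag M2"
    and "linear U"
    and "\<nu> \<ge> 0"
    and "v0 \<in> Vh D2 M1"
  shows "\<exists>v. is_solution D2 M1 M2 D1t U \<nu> v0 v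
           \<and> (\<forall>w. is_solution D2 M1 M2 D1t U \<nu> v0 w \<longrightarrow> (\<forall>t\<ge>0. w t = v t))
           \<and> (\<forall>t\<ge>0. ((\<lambda>s. Ekin M1 (v s)) has_real_derivative
                        (- \<nu> * normsq_M M2 (D1t *v v t))) (at t within {0..})
                    \<and> - \<nu> * normsq_M M2 (D1t *v v t) \<le> 0)
           \<and> (\<forall>t\<ge>0. Ekin M1 (v t) \<le> Ekin M1 (v 0))
           \<and> (\<forall>T>0. \<nu> * integral {0..T} (\<lambda>t. normsq_M M2 (D1t *v v t)) \<le> Ekin M1 (v 0))"
proof -
  note D = assms(1) and M = assms(2) and M2p = assms(3) and U = assms(4) and nu = assms(5)
    and v0V = assms(6)
  define F where "F = Fvec D2 M1 M2 D1t U \<nu>"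
  have Fexp: "F x = - Ph D2 M1 (Qop M1 D1t U x x) - \<nu> *\<^sub>R (Deltah M1 M2 D1t *v x)" for x
    by (simp add: F_def Fvec_def)
  have sol_iff: "is_solution D2 M1 M2 D1t U \<nu> v0 w \<longleftrightarrow>
     w 0 = v0 \<and> (\<forall>t\<ge>0. w t \<in> Vh D2 M1) \<and>
     (\<exists>v'. continuous_on {0..} v' \<and> (\<forall>t\<ge>0. (w has_vector_derivative v' t) (at t within {0..}))) \<and>
     (\<forall>t\<ge>0. (w has_vector_derivative F (w t)) (at t within {0..}))" for w
    unfolding is_solution_def Fexp ..
  have F_en: "inner_M M1 u (F u) = - \<nu> * normsq_M M2 (D1t *v u)" if "u \<in> Vh D2 M1" for u
    unfolding F_def by (rule Fvec_energy[OF M that])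
  have en_le: "- \<nu> * normsq_M M2 (D1t *v u) \<le> 0" for u
    using nu normsq_nonneg[OF M2p, of "D1t *v u"] by (simp add: mult_nonneg_nonneg)
  define e0 where "e0 = inner_M M1 v0 v0"
  have e0nn: "0 \<le> e0" unfolding e0_def by (rule inner_M_nonneg[OF M])
  obtain m where m: "m > 0" "\<And>x. m * (x \<bullet> x) \<le> inner_M M1 x x" using inner_M_lower[OF M] by blast
  define R where "R = e0 / m + 1"
  have R1: "R \<ge> 1" unfolding R_def using e0nn m(1) by simp
  have Rbound: "norm x \<le> R" if "inner_M M1 x x \<le> e0" for x
  proof -
    have "m * (norm x)^2 \<le> e0" using m(2)[of x] that by (simp add: power2_norm_eq_inner)
    then have "(norm x)^2 \<le> e0 / m" using m(1) by (simp add: field_simps)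
    then show ?thesis unfolding R_def using le_one_plus_sq[of "norm x"] by linarith
  qed
  have EkinR: "norm x \<le> R" if "Ekin M1 x \<le> Ekin M1 v0" for x
    using that Rbound unfolding Ekin_def e0_def by simp
  define C where "C = cball (0::real^'e) R"
  have Cc: "convex C" "closed C" "C \<noteq> {}" unfolding C_def using R1 by auto
  define r where "r = closest_point C"
  have r_in: "norm (r x) \<le> R" for x using closest_point_in_set[OF Cc(2,3), of x] unfolding r_def C_def by simp
  have r_lip: "norm (r x - r y) \<le> norm (x - y)" for x y
    using closest_point_lipschitz[OF Cc, of x y] unfolding r_def by (simp add: dist_norm)
  have r_id: "r x = x" if "norm x \<le> R" for x
    unfolding r_def by (rule closest_point_self) (use that in \<open>simp add: C_def\<close>)
  have r_rad: "\<exists>c>0. r x = c *\<^sub>R x" for x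
  proof (cases "norm x \<le> R")
    case True
    then show ?thesis using r_id[OF True] by (intro exI[of _ 1]) simp
  next
    case False
    then have nx: "norm x > R" by simp
    define c where "c = R / norm x"
    have nx0: "norm x > 0" using nx R1 by linarith
    have c01: "c > 0" unfolding c_def using nx0 R1 by simp
    have c02: "c < 1" unfolding c_def using nx nx0 by (simp add: divide_less_eq)
    note c0 = c01 c02
    have ncx: "norm (c *\<^sub>R x) = R" unfolding c_def using nx0 R1 by simp
    have "c *\<^sub>R x = closest_point C x"
    proof (rule closest_point_unique[OF Cc(1,2)])
      show "c *\<^sub>R x \<in> C" unfolding C_def using ncx by simp
      show "\<forall>z\<in>C. dist x (c *\<^sub>R x) \<le> dist x z"
      proof
        fix z assume "z \<in> C"
        then have nz: "norm z \<le> R" unfolding C_def by simp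
        have "dist x (c *\<^sub>R x) = norm ((1 - c) *\<^sub>R x)" by (simp add: dist_norm algebra_simps)
        also have "\<dots> = (1 - c) * norm x" using c0 by simp
        also have "\<dots> = norm x - R" unfolding c_def using nx0 by (simp add: field_simps)
        also have "\<dots> \<le> norm x - norm z" using nz by simp
        also have "\<dots> \<le> norm (x - z)" by (rule norm_triangle_ineq2)
        finally show "dist x (c *\<^sub>R x) \<le> dist x z" by (simp add: dist_norm)
      qed
    qed
    then show ?thesis using c0 unfolding r_def by auto
  qed
  have "\<exists>K\<ge>0. \<forall>x y. norm x \<le> R \<longrightarrow> norm y \<le> R \<longrightarrow> norm (F x - F y) \<le> K * norm (x - y)"
    unfolding F_def by (rule Fvec_lip_ex[OF M U])
  then obtain K where K: "K \<ge> 0" and Kl: "\<And>x y. norm x \<le> R \<Longrightarrow> norm y \<le> R \<Longrightarrow> norm (F x - F y) \<le> K * norm (x - y)"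
    by blast
  define G where "G x = F (r x)" for x
  have GL: "norm (G x - G y) \<le> K * norm (x - y)" for x y
  proof -
    have "norm (G x - G y) \<le> K * norm (r x - r y)" unfolding G_def using Kl r_in by blast
    also have "\<dots> \<le> K * norm (x - y)" using r_lip K by (rule mult_left_mono)
    finally show ?thesis .
  qed
  have G_Vh: "G x \<in> Vh D2 M1" for x unfolding G_def F_def by (rule Fvec_Vh[OF D M])
  have G_en: "inner_M M1 u (G u) \<le> 0" if u: "u \<in> Vh D2 M1" for u
  proof -
    obtain c where c: "c > 0" "r u = c *\<^sub>R u" using r_rad by blast
    have cu: "c *\<^sub>R u \<in> Vh D2 M1" using u by (rule Vh_scale)
    have "c * inner_M M1 u (F (c *\<^sub>R u)) = inner_M M1 (c *\<^sub>R u) (F (c *\<^sub>R u))"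
      by (simp add: inner_M_scale_left)
    also have "\<dots> \<le> 0" using F_en[OF cu] en_le by simp
    finally have "c * inner_M M1 u (F (c *\<^sub>R u)) \<le> 0" .
    then have "inner_M M1 u (F (c *\<^sub>R u)) \<le> 0" using c(1) by (simp add: mult_le_0_iff)
    then show ?thesis unfolding G_def c(2) .
  qed
  have Gc: "continuous_on S G" for S by (rule lip_cont[OF GL K])
  obtain v where v0: "v 0 = v0" and vd: "\<And>t. t \<ge> 0 \<Longrightarrow> (v has_vector_derivative G (v t)) (at t within {0..})"
    using ode_exists_global[OF GL K, of v0] by blast
  have vV: "v t \<in> Vh D2 M1" if "t \<ge> 0" for t
    by (rule Vh_inv[of v, OF _ vd G_Vh that]) (simp add: v0 v0V)
  have vE: "Ekin M1 (v t) \<le> Ekin M1 (v 0)" if "t \<ge> 0" for t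
    by (rule Ekin_decr[OF M, of v "\<lambda>s. G (v s)"]) (simp_all add: vd G_en vV that)
  have vF: "G (v t) = F (v t)" if "t \<ge> 0" for t
    unfolding G_def using r_id EkinR vE[OF that] v0 by simp
  have vdF: "(v has_vector_derivative F (v t)) (at t within {0..})" if "t \<ge> 0" for t
    using vd[OF that] vF[OF that] by simp
  have vcont: "continuous_on {0..} v"
    unfolding continuous_on_eq_continuous_within
    using vd has_vector_derivative_continuous by (metis atLeast_iff)
  have sol: "is_solution D2 M1 M2 D1t U \<nu> v0 v"
    unfolding sol_iff
  proof (intro conjI allI impI)
    show "v 0 = v0" by (rule v0)
    show "v t \<in> Vh D2 M1" if "t \<ge> 0" for t using vV that by blast
    show "(v has_vector_derivative F (v t)) (at t within {0..})" if "t \<ge> 0" for t using vdF that by blast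
    show "\<exists>v'. continuous_on {0..} v' \<and> (\<forall>t\<ge>0. (v has_vector_derivative v' t) (at t within {0..}))"
    proof (intro exI conjI allI impI)
      show "continuous_on {0..} (\<lambda>t. G (v t))"
        by (rule continuous_on_compose2[OF Gc vcont]) auto
      show "(v has_vector_derivative G (v t)) (at t within {0..})" if "t \<ge> 0" for t using vd that by blast
    qed
  qed
  have uniq: "\<forall>t\<ge>0. w t = v t" if w: "is_solution D2 M1 M2 D1t U \<nu> v0 w" for w
  proof (intro allI impI)
    fix t :: real assume t: "t \<ge> 0"
    have w0: "w 0 = v0" and wV: "\<And>t. t \<ge> 0 \<Longrightarrow> w t \<in> Vh D2 M1"
      and wd: "\<And>t. t \<ge> 0 \<Longrightarrow> (w has_vector_derivative F (w t)) (at t within {0..})"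
      using w unfolding sol_iff by auto
    have wE: "Ekin M1 (w s) \<le> Ekin M1 (w 0)" if "s \<ge> 0" for s
      by (rule Ekin_decr[OF M, of w "\<lambda>s. F (w s)"]) (simp_all add: wd F_en wV that nu normsq_nonneg[OF M2p])
    have wG: "G (w s) = F (w s)" if "s \<ge> 0" for s
      unfolding G_def using r_id EkinR wE[OF that] w0 by simp
    show "w t = v t"
    proof (rule ode_unique[OF GL K])
      show "(w has_vector_derivative G (w s)) (at s within {0..t})" if s: "s \<in> {0..t}" for s
      proof -
        have "(w has_vector_derivative G (w s)) (at s within {0..})" using wd[of s] wG[of s] s by simp
        then show ?thesis by (rule has_vector_derivative_within_subset) auto
      qed
      show "(v has_vector_derivative G (v s)) (at s within {0..t})" if s: "s \<in> {0..t}" for s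
      proof -
        have "(v has_vector_derivative G (v s)) (at s within {0..})" using vd[of s] s by simp
        then show ?thesis by (rule has_vector_derivative_within_subset) auto
      qed
      show "w 0 = v 0" using w0 v0 by simp
      show "t \<in> {0..t}" using t by simp
    qed
  qed
  have ender: "((\<lambda>s. Ekin M1 (v s)) has_real_derivative (- \<nu> * normsq_M M2 (D1t *v v t))) (at t within S)"
    if t: "t \<ge> 0" and S: "S \<subseteq> {0..}" for t S
  proof -
    have "(v has_vector_derivative F (v t)) (at t within S)"
      using vdF[OF t] S by (rule has_vector_derivative_within_subset)
    from Ekin_deriv[OF M this] show ?thesis using F_en[OF vV[OF t]] by simp
  qed
  have intb: "\<nu> * integral {0..T} (\<lambda>t. normsq_M M2 (D1t *v v t)) \<le> Ekin M1 (v 0)" if T: "T > 0" for T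
  proof -
    have "((\<lambda>t. - \<nu> * normsq_M M2 (D1t *v v t)) has_integral (Ekin M1 (v T) - Ekin M1 (v 0))) {0..T}"
    proof (rule fundamental_theorem_of_calculus)
      show "0 \<le> T" using T by simp
      fix s assume s: "s \<in> {0..T}"
      have "((\<lambda>s. Ekin M1 (v s)) has_real_derivative (- \<nu> * normsq_M M2 (D1t *v v s))) (at s within {0..T})"
        by (rule ender) (use s in auto)
      then show "((\<lambda>s. Ekin M1 (v s)) has_vector_derivative (- \<nu> * normsq_M M2 (D1t *v v s))) (at s within {0..T})"
        unfolding has_real_derivative_iff_has_vector_derivative .
    qed
    then have "integral {0..T} (\<lambda>t. - \<nu> * normsq_M M2 (D1t *v v t)) = Ekin M1 (v T) - Ekin M1 (v 0)"
      by (rule integral_unique)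
    then have "- \<nu> * integral {0..T} (\<lambda>t. normsq_M M2 (D1t *v v t)) = Ekin M1 (v T) - Ekin M1 (v 0)"
      by simp
    moreover have "0 \<le> Ekin M1 (v T)" unfolding Ekin_def using inner_M_nonneg[OF M] by simp
    ultimately show ?thesis by linarith
  qed
  show ?thesis
  proof (intro exI conjI allI impI)
    show "is_solution D2 M1 M2 D1t U \<nu> v0 v" by (rule sol)
    show "w t = v t" if "is_solution D2 M1 M2 D1t U \<nu> v0 w" "t \<ge> 0" for w t using uniq that by blast
    show "((\<lambda>s. Ekin M1 (v s)) has_real_derivative (- \<nu> * normsq_M M2 (D1t *v v t))) (at t within {0..})"
      if "t \<ge> 0" for t using ender[OF that] by simp
    show "- \<nu> * normsq_M M2 (D1t *v v t) \<le> 0" for t by (rule en_le)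
    show "Ekin M1 (v t) \<le> Ekin M1 (v 0)" if "t \<ge> 0" for t using vE that by blast
    show "\<nu> * integral {0..T} (\<lambda>t. normsq_M M2 (D1t *v v t)) \<le> Ekin M1 (v 0)" if "T > 0" for T
      using intb that by blast
  qed
qed

end
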